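(* Consider the status-update system described in the context. For every slot $t$ (whenever the conditioning events involved have positive probability), the belief $\beta(t+1)=(\beta_0(t+1),\dots,\beta_B(t+1))^{\mathrm T}$ about the battery level is obtained from $\beta(t)$, the action $a(t)$ and the new observation $o(t+1)=(r(t+1),\Delta(t+1),\tilde b(t+1))$ as \[ \beta(t+1)=\begin{cases} \boldsymbol{\Lambda}\beta(t), & a(t)=0,\\ \rho^{0}, & a(t)=1,\ \Delta(t+1)>1,\\ \rho^{j}, & a(t)=1,\ \Delta(t+1)=1,\ \tilde b(t+1)=j,\quad j\in\{1,\dots,B\}, \end{cases} \] where $\boldsymbol{\Lambda}\in[0,1]^{(B+1)\times(B+1)}$ is the left stochastic matrix (rows and columns indexed by $0,\dots,B$) with entries $\Lambda_{j,j}=1-\lambda$ and $\Lambda_{j+1,j}=\lambda$ for $j=0,\dots,B-1$, $\Lambda_{B,B}=1$, and all other entries $0$; and the vectors $\rho^j\in[0,1]^{B+1}$ are $\rho^0=\rho^1=(1-\lambda,\lambda,0,\dots,0)^{\mathrm T}$ and, for $j=1,\dots,B$, $\rho^j$ has entry $1-\lambda$ at index $j-1$, entry $\lambda$ at index $j$, and zeros elsewhere (indices $0,\dots,B$).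
   Context: Time is slotted, $t=1,2,\dots$. A sensor has a battery of capacity $B\in\{1,2,\dots\}$ units, with level $b(t)\in\{0,\dots,B\}$ at the beginning of slot $t$. Energy arrivals $e(t)\in\{0,1\}$ are i.i.d. Bernoulli with $\Pr(e(t)=1)=\lambda$; requests $r(t)\in\{0,1\}$ are i.i.d. Bernoulli with $\Pr(r(t)=1)=p$; the two processes are independent of each other and of everything else. At each slot an edge node chooses an action $a(t)\in\{0,1\}$ (command the sensor to send an update or not); the sensor sends an update iff $d(t)=a(t)\mathbf 1_{\{b(t)\ge 1\}}=1$, and $b(t+1)=\min\{b(t)+e(t)-d(t),B\}$. The age of information $\Delta(t)\in\{1,\dots,\Delta^{\max}\}$ (with $\Delta^{\max}\ge 2$ an integer) evolves as $\Delta(t+1)=1$ if $d(t)=1$ and $\Delta(t+1)=\min\{\Delta(t)+1,\Delta^{\max}\}$ if $d(t)=0$. Each received update carries the sensor's battery level at the slot it was sent, so the edge node's partial battery knowledge $\tilde b(t)\in\{1,\dots,B\}$ evolves as $\tilde b(t+1)=b(t)$ if $d(t)=1$ and $\tilde b(t+1)=\tilde b(t)$ if $d(t)=0$. The edge node observes $o(t)=(r(t),\Delta(t),\tilde b(t))$ but not $b(t)$. The complete information state $\phi^{c}(t)$ consists of an initial probability distribution over the states together with $o(1),\dots,o(t),a(1),\dots,a(t-1)$; the action $a(t)$ is a (possibly randomized, with randomization independent of everything else) function of $\phi^c(t)$. The belief is $\beta_j(t)=\Pr(b(t)=j\mid \phi^{c}(t))$, $j=0,\dots,B$. *)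

theory Defs
  imports "HOL-Probability.Probability"
begin

text \<open>System state at the beginning of a slot: (b, Delta, b_tilde, r),
  with the request r encoded as 0/1. Observation o = (r, Delta, b_tilde).\<close>

type_synonym st = "nat \<times> nat \<times> nat \<times> nat"
type_synonym ob = "nat \<times> nat \<times> nat"

definition bat :: "st \<Rightarrow> nat" where "bat s = fst s"

definition obs :: "st \<Rightarrow> ob" where
  "obs s = (case s of (b, D, bt, r) \<Rightarrow> (r, D, bt))"

definition ob_age :: "ob \<Rightarrow> nat" where "ob_age x = fst (snd x)"
definition ob_bt :: "ob \<Rightarrow> nat" where "ob_bt x = snd (snd x)"

definition step :: "nat \<Rightarrow> nat \<Rightarrow> real \<Rightarrow> real \<Rightarrow> st \<Rightarrow> nat \<Rightarrow> st pmf" where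
  "step B Dmax lam p s a =
     bind_pmf (bernoulli_pmf lam) (\<lambda>eb. bind_pmf (bernoulli_pmf p) (\<lambda>rb.
       (case s of (b, D, bt, r) \<Rightarrow>
         (let e = of_bool eb :: nat;
              d = a * (if b \<ge> 1 then 1 else 0)
          in return_pmf (min (b + e - d) B,
                         (if d = 1 then 1 else min (D + 1) Dmax),
                         (if d = 1 then b else bt),
                         of_bool rb)))))"

definition init_state :: "real \<Rightarrow> (nat \<times> nat \<times> nat) pmf \<Rightarrow> st pmf" where
  "init_state p init =
     bind_pmf init (\<lambda>(b, D, bt). bind_pmf (bernoulli_pmf p) (\<lambda>rb. return_pmf (b, D, bt, of_bool rb)))"

text \<open>Joint law of the trajectory: run n is the distribution of
  ([s(1),...,s(n+1)], [a(1),...,a(n)]).  The (randomized) policy pol maps the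
  observation history [o(1),...,o(t)] and past actions [a(1),...,a(t-1)] to a
  distribution of a(t) (the initial distribution is fixed, so it is implicit).\<close>
primrec run :: "nat \<Rightarrow> nat \<Rightarrow> real \<Rightarrow> real \<Rightarrow> (nat \<times> nat \<times> nat) pmf
                 \<Rightarrow> (ob list \<Rightarrow> nat list \<Rightarrow> nat pmf) \<Rightarrow> nat \<Rightarrow> (st list \<times> nat list) pmf" where
  "run B Dmax lam p init pol 0 = map_pmf (\<lambda>s. ([s], [])) (init_state p init)"
| "run B Dmax lam p init pol (Suc n) =
     bind_pmf (run B Dmax lam p init pol n) (\<lambda>(ss, as).
       bind_pmf (pol (map obs ss) as) (\<lambda>a.
         bind_pmf (step B Dmax lam p (last ss) a) (\<lambda>s'.
           return_pmf (ss @ [s'], as @ [a]))))"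

text \<open>Probability of the information state (o(1..t), a(1..t-1)) = (os, as), computed
  in the law of the history up to slot t (i.e. run (t-1)).\<close>
definition hist_prob :: "nat \<Rightarrow> nat \<Rightarrow> real \<Rightarrow> real \<Rightarrow> (nat \<times> nat \<times> nat) pmf
                 \<Rightarrow> (ob list \<Rightarrow> nat list \<Rightarrow> nat pmf) \<Rightarrow> nat \<Rightarrow> ob list \<Rightarrow> nat list \<Rightarrow> real" where
  "hist_prob B Dmax lam p init pol t os as =
     measure_pmf.prob (run B Dmax lam p init pol (t - 1))
       {h. map obs (fst h) = os \<and> snd h = as}"

definition belief :: "nat \<Rightarrow> nat \<Rightarrow> real \<Rightarrow> real \<Rightarrow> (nat \<times> nat \<times> nat) pmf
                 \<Rightarrow> (ob list \<Rightarrow> nat list \<Rightarrow> nat pmf) \<Rightarrow> nat \<Rightarrow> ob list \<Rightarrow> nat list \<Rightarrow> nat \<Rightarrow> real" where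
  "belief B Dmax lam p init pol t os as j =
     measure_pmf.prob (run B Dmax lam p init pol (t - 1))
       {h. map obs (fst h) = os \<and> snd h = as \<and> bat (last (fst h)) = j}
     / hist_prob B Dmax lam p init pol t os as"

definition Lam :: "nat \<Rightarrow> real \<Rightarrow> nat \<Rightarrow> nat \<Rightarrow> real" where
  "Lam B lam i j =
     (if j < B \<and> i = j then 1 - lam
      else if j < B \<and> i = j + 1 then lam
      else if i = B \<and> j = B then 1 else 0)"

definition rho :: "real \<Rightarrow> nat \<Rightarrow> nat \<Rightarrow> real" where
  "rho lam k i =
     (if k = 0 then (if i = 0 then 1 - lam else if i = 1 then lam else 0)
      else (if i = k - 1 then 1 - lam else if i = k then lam else 0))"

end

theory Submission
  imports Defs
begin

lemma prob_bind_pmf: "measure_pmf.prob (bind_pmf M f) A = (\<integral>x. measure_pmf.prob (f x) A \<partial>measure_pmf M)"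
  unfolding measure_pmf_bind
  by (rule measure_pmf.measure_bind[where N="count_space UNIV"])
     (auto simp: measure_pmf_in_subprob_algebra)

lemma integral_eq_point: "(\<integral>x. of_bool (x = y) * g x \<partial>measure_pmf M) = pmf M y * (g y :: real)"
proof -
  have "(\<integral>x. of_bool (x = y) * g x \<partial>measure_pmf M) = (\<integral>x. indicator {y} x * g y \<partial>measure_pmf M)"
    by (intro Bochner_Integration.integral_cong) (auto split: split_indicator)
  also have "\<dots> = measure_pmf.prob M {y} * g y" by simp
  finally show ?thesis by (simp add: measure_pmf_single)
qed

lemma run_inv:
  assumes "set_pmf init \<subseteq> {0..B} \<times> {1..Dmax} \<times> {1..B}" "Dmax \<ge> 1"
  shows "h \<in> set_pmf (run B Dmax lam p init pol n) \<Longrightarrow> fst h \<noteq> [] \<and> length (fst h) = Suc n \<and> length (snd h) = n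
     \<and> (\<forall>s \<in> set (fst h). bat s \<le> B \<and> fst (snd s) \<ge> 1)"
proof (induction n arbitrary: h)
  case 0
  then show ?case using assms
    by (auto simp: init_state_def set_bind_pmf bat_def split: prod.splits)
next
  case (Suc n)
  have st: "\<And>s a s'. s' \<in> set_pmf (step B Dmax lam p s a) \<Longrightarrow> bat s' \<le> B \<and> fst (snd s') \<ge> 1"
    using assms by (auto simp: step_def set_bind_pmf bat_def split: prod.splits)
  from Suc.prems obtain ss as a s' where h: "(ss, as) \<in> set_pmf (run B Dmax lam p init pol n)"
    "s' \<in> set_pmf (step B Dmax lam p (last ss) a)" "h = (ss @ [s'], as @ [a])"
    by (auto simp: set_bind_pmf split: prod.splits)
  show ?case using Suc.IH[OF h(1)] st[OF h(2)] h(3) by auto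
qed

lemma num:
  assumes "set_pmf init \<subseteq> {0..B} \<times> {1..Dmax} \<times> {1..B}" "Dmax \<ge> 1"
    and "os0 \<noteq> []" "last os0 = (r0, D0, bt0)"
  shows "measure_pmf.prob (run B Dmax lam p init pol (Suc n))
      {h. map obs (fst h) = os0 @ [(r', D', bt')] \<and> snd h = as0 @ [a'] \<and> bat (last (fst h)) = j}
    = pmf (pol os0 as0) a' * (\<Sum>i\<le>B. pmf (step B Dmax lam p (i, D0, bt0, r0) a') (j, D', bt', r')
        * measure_pmf.prob (run B Dmax lam p init pol n)
           {h. map obs (fst h) = os0 \<and> snd h = as0 \<and> bat (last (fst h)) = i})"
proof -
  define A where "A = {h. map obs (fst h) = os0 @ [(r', D', bt')] \<and> snd h = as0 @ [a'] \<and> bat (last (fst h)) = j}"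
  define E where "E i = {h. map obs (fst h) = os0 \<and> snd h = as0 \<and> bat (last (fst h)) = i}" for i
  define c where "c = pmf (pol os0 as0) a'"
  define G where "G i = pmf (step B Dmax lam p (i, D0, bt0, r0) a') (j, D', bt', r')" for i
  let ?R = "run B Dmax lam p init pol n"
  let ?F = "\<lambda>(ss, as). bind_pmf (pol (map obs ss) as) (\<lambda>a.
         bind_pmf (step B Dmax lam p (last ss) a) (\<lambda>s'.
           return_pmf (ss @ [s'], as @ [a])))"
  have 1: "measure_pmf.prob (run B Dmax lam p init pol (Suc n)) A = (\<integral>h. measure_pmf.prob (?F h) A \<partial>?R)"
    unfolding run.simps(2) prob_bind_pmf ..
  have 2: "measure_pmf.prob (?F h) A = (\<Sum>i\<le>B. c * G i * indicator (E i) h)" if hR: "h \<in> set_pmf ?R" for h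
  proof -
    obtain ss bs where h: "h = (ss, bs)" by (cases h)
    have inv: "ss \<noteq> []" "\<forall>s \<in> set ss. bat s \<le> B \<and> fst (snd s) \<ge> 1"
      using run_inv[OF assms(1,2) hR] h by auto
    have P: "measure_pmf.prob (?F h) A = (\<integral>a. \<integral>s'. indicator A (ss @ [s'], bs @ [a])
         \<partial>measure_pmf (step B Dmax lam p (last ss) a) \<partial>measure_pmf (pol (map obs ss) bs))"
      unfolding h prod.case prob_bind_pmf by simp
    show ?thesis
    proof (cases "map obs ss = os0 \<and> bs = as0")
      case True
      define i0 where "i0 = bat (last ss)"
      have i0B: "i0 \<le> B" using inv unfolding i0_def by auto
      have lastss: "last ss = (i0, D0, bt0, r0)"
      proof -
        have "obs (last ss) = last os0" using True inv(1) by (metis last_map)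
        then show ?thesis using assms(4) unfolding i0_def
          by (cases "last ss") (auto simp: obs_def bat_def)
      qed
      have ind: "indicator A (ss @ [s'], bs @ [a]) = (of_bool (s' = (j, D', bt', r')) * of_bool (a = a') :: real)" for s' a
        using True unfolding A_def
        by (cases s') (auto simp: obs_def bat_def split: split_indicator)
      have "measure_pmf.prob (?F h) A = (\<integral>a. of_bool (a = a') * pmf (step B Dmax lam p (last ss) a) (j, D', bt', r')
          \<partial>measure_pmf (pol (map obs ss) bs))"
        unfolding P ind integral_eq_point by (simp add: integral_eq_point mult.commute)
      also have "\<dots> = c * G i0"
        unfolding integral_eq_point c_def G_def using True lastss by simp
      also have "\<dots> = (\<Sum>i\<le>B. c * G i * indicator (E i) h)"
      proof -
        have "indicator (E i) h = (if i = i0 then 1 else 0 :: real)" for i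
          using True unfolding E_def h i0_def by (auto split: split_indicator)
        then have "(\<Sum>i\<le>B. c * G i * indicator (E i) h) = (\<Sum>i\<le>B. if i = i0 then c * G i else 0)"
          by (intro sum.cong) auto
        then show ?thesis using i0B by simp
      qed
      finally show ?thesis .
    next
      case False
      have ind: "indicator A (ss @ [s'], bs @ [a]) = (0::real)" for s' a
        using False unfolding A_def by (auto split: split_indicator)
      have ind2: "indicator (E i) h = (0::real)" for i
        using False unfolding E_def h by (auto split: split_indicator)
      show ?thesis unfolding P ind ind2 by simp
    qed
  qed
  have "measure_pmf.prob (run B Dmax lam p init pol (Suc n)) A = (\<integral>h. (\<Sum>i\<le>B. c * G i * indicator (E i) h) \<partial>?R)"
    unfolding 1 by (intro integral_cong_AE) (auto simp: AE_measure_pmf_iff 2)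
  also have "\<dots> = (\<Sum>i\<le>B. c * G i * measure_pmf.prob ?R (E i))"
    by (subst Bochner_Integration.integral_sum)
       (auto intro!: integrable_real_indicator simp: measure_pmf.emeasure_eq_measure)
  finally show ?thesis unfolding A_def E_def c_def G_def by (simp add: sum_distrib_left mult.assoc)
qed

lemma pmf_bb:
  assumes "0 \<le> lam" "lam \<le> 1" "0 \<le> p" "p \<le> 1"
  shows "pmf (bind_pmf (bernoulli_pmf lam) (\<lambda>eb. bind_pmf (bernoulli_pmf p) (\<lambda>rb. return_pmf (f eb rb)))) x
   = lam * (p * of_bool (f True True = x) + (1-p) * of_bool (f True False = x))
     + (1-lam) * (p * of_bool (f False True = x) + (1-p) * of_bool (f False False = x))"
  using assms by (simp add: pmf_bind indicator_def algebra_simps)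

lemma pmf_step:
  assumes "0 \<le> lam" "lam \<le> 1" "0 \<le> p" "p \<le> 1"
  shows "pmf (step B Dmax lam p (b, D, bt, r) a) (j, D', bt', r') =
    (let d = a * (if b \<ge> 1 then 1 else 0) in
    (lam * of_bool (min (b + 1 - d) B = j) + (1 - lam) * of_bool (min (b - d) B = j))
    * of_bool (D' = (if d = 1 then 1 else min (D + 1) Dmax) \<and> bt' = (if d = 1 then b else bt))
    * (p * of_bool (r' = 1) + (1 - p) * of_bool (r' = 0)))"
proof -
  define d where "d = a * (if b \<ge> 1 then 1 else 0)"
  define Y where "Y = (D' = (if d = 1 then 1 else min (D + 1) Dmax) \<and> bt' = (if d = 1 then b else bt))"
  have e: "\<And>e rb. ((min (b + of_bool e - d) B, (if d = 1 then 1 else min (D + 1) Dmax), (if d = 1 then b else bt), of_bool rb) = (j, D', bt', r'))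
     \<longleftrightarrow> (min (b + of_bool e - d) B = j \<and> Y \<and> r' = of_bool rb)"
    unfolding Y_def by auto
  have "pmf (step B Dmax lam p (b, D, bt, r) a) (j, D', bt', r') =
     lam * (p * of_bool (min (b + 1 - d) B = j \<and> Y \<and> r' = 1) + (1-p) * of_bool (min (b + 1 - d) B = j \<and> Y \<and> r' = 0))
     + (1-lam) * (p * of_bool (min (b - d) B = j \<and> Y \<and> r' = 1) + (1-p) * of_bool (min (b - d) B = j \<and> Y \<and> r' = 0))"
    unfolding step_def Let_def prod.case d_def[symmetric]
    apply (subst pmf_bb[OF assms])
    apply (simp only: e)
    apply (simp only: of_bool_eq add_0_right)
    done
  also have "\<dots> = (lam * of_bool (min (b + 1 - d) B = j) + (1 - lam) * of_bool (min (b - d) B = j))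
    * of_bool Y * (p * of_bool (r' = 1) + (1 - p) * of_bool (r' = 0))"
    by (simp only: of_bool_conj) (simp add: algebra_simps)
  finally show ?thesis unfolding Let_def d_def Y_def .
qed

lemma prob_split:
  assumes "\<forall>x\<in>set_pmf M. f x \<le> (B::nat)"
  shows "measure_pmf.prob M {x. Q x} = (\<Sum>i\<le>B. measure_pmf.prob M {x. Q x \<and> f x = i})"
proof -
  have "measure_pmf.prob M {x. Q x} = measure_pmf.prob M ({x. Q x} \<inter> set_pmf M)"
    by (simp add: measure_Int_set_pmf)
  also have "{x. Q x} \<inter> set_pmf M = (\<Union>i\<le>B. {x. Q x \<and> f x = i}) \<inter> set_pmf M"
    using assms by auto
  also have "measure_pmf.prob M \<dots> = measure_pmf.prob M (\<Union>i\<le>B. {x. Q x \<and> f x = i})"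
    by (simp add: measure_Int_set_pmf)
  also have "\<dots> = (\<Sum>i\<le>B. measure_pmf.prob M {x. Q x \<and> f x = i})"
    by (rule measure_pmf.finite_measure_finite_Union) (auto simp: disjoint_family_on_def)
  finally show ?thesis .
qed

lemma sum_min_delta: "(\<Sum>j\<le>(B::nat). of_bool (min y B = j) :: real) = 1"
proof -
  have "(\<Sum>j\<le>B. of_bool (min y B = j) :: real) = (\<Sum>j\<le>B. if min y B = j then 1 else 0)"
    by (intro sum.cong) auto
  also have "\<dots> = 1" using sum.delta'[of "{..B}" "min y B" "\<lambda>_. 1::real"] by (simp del: sum.delta')
  finally show ?thesis .
qed

lemma sum_W: "(\<Sum>j\<le>(B::nat). lam * of_bool (min x B = j) + (1 - lam) * of_bool (min y B = j) :: real) = 1"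
  by (simp add: sum.distrib sum_distrib_left[symmetric] sum_min_delta)

lemma sum_single:
  assumes "i0 \<le> (B::nat)" "\<forall>i\<le>B. i \<noteq> i0 \<longrightarrow> f i = 0"
  shows "(\<Sum>i\<le>B. f i) = (f i0 :: real)"
proof -
  have "(\<Sum>i\<le>B. f i) = f i0 + (\<Sum>i\<in>{..B}-{i0}. f i)"
    by (rule sum.remove) (use assms in auto)
  also have "(\<Sum>i\<in>{..B}-{i0}. f i) = 0"
    by (rule sum.neutral) (use assms in auto)
  finally show ?thesis by simp
qed

lemma ratio_single:
  fixes N v :: "nat \<Rightarrow> real"
  assumes "\<forall>j\<le>B. N j = C * v j" "H = (\<Sum>j\<le>B. N j)" "(\<Sum>j\<le>B. v j) = 1" "H > 0"
  shows "\<forall>j\<le>B. N j / H = v j"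
proof -
  have "H = (\<Sum>j\<le>B. C * v j)" using assms(1,2) by simp
  also have "\<dots> = C" by (simp add: sum_distrib_left[symmetric] assms(3))
  finally have "H = C" .
  then show ?thesis using assms(1,4) by auto
qed


theorem theorem1:
  fixes B Dmax :: nat and lam p :: real
    and init :: "(nat \<times> nat \<times> nat) pmf"
    and pol :: "ob list \<Rightarrow> nat list \<Rightarrow> nat pmf"
    and t :: nat and os :: "ob list" and as :: "nat list"
  assumes "B \<ge> 1" and "Dmax \<ge> 2"
    and "0 \<le> lam" and "lam \<le> 1" and "0 \<le> p" and "p \<le> 1"
    and "set_pmf init \<subseteq> {0..B} \<times> {1..Dmax} \<times> {1..B}"
    and "\<And>os' as'. set_pmf (pol os' as') \<subseteq> {0, 1}"
    and "t \<ge> 1" and "length os = t + 1" and "length as = t"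
    and "hist_prob B Dmax lam p init pol (t + 1) os as > 0"
  shows
    "(as ! (t - 1) = 0 \<longrightarrow>
        (\<forall>j \<le> B. belief B Dmax lam p init pol (t + 1) os as j =
           (\<Sum>i \<le> B. Lam B lam j i * belief B Dmax lam p init pol t (take t os) (take (t - 1) as) i)))
     \<and> (as ! (t - 1) = 1 \<and> ob_age (os ! t) > 1 \<longrightarrow>
        (\<forall>j \<le> B. belief B Dmax lam p init pol (t + 1) os as j = rho lam 0 j))
     \<and> (\<forall>k \<in> {1..B}. as ! (t - 1) = 1 \<and> ob_age (os ! t) = 1 \<and> ob_bt (os ! t) = k \<longrightarrow>
        (\<forall>j \<le> B. belief B Dmax lam p init pol (t + 1) os as j = rho lam k j))"
proof -
  have Dm1: "Dmax \<ge> 1" using assms(2) by simp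
  obtain n where tn: "t = Suc n" using assms(9) by (cases t) auto
  define os0 where "os0 = take t os"
  define as0 where "as0 = take (t - 1) as"
  obtain r' D' bt' where o': "os ! t = (r', D', bt')" by (cases "os ! t") auto
  define a' where "a' = as ! (t - 1)"
  have "take (Suc t) os = take t os @ [os ! t]"
    by (rule take_Suc_conv_app_nth) (use assms(10) in simp)
  then have os_eq: "os = os0 @ [(r', D', bt')]"
    using assms(10) o' unfolding os0_def by simp
  have "take (Suc n) as = take n as @ [as ! n]"
    by (rule take_Suc_conv_app_nth) (use assms(11) tn in simp)
  then have as_eq: "as = as0 @ [a']"
    using assms(11) tn unfolding as0_def a'_def by simp
  have os0ne: "os0 \<noteq> []" using assms(9,10) by (cases os) (auto simp: os0_def)
  obtain r0 D0 bt0 where l0: "last os0 = (r0, D0, bt0)" by (cases "last os0") auto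
  have inv: "\<forall>h\<in>set_pmf (run B Dmax lam p init pol m). bat (last (fst h)) \<le> B" for m
    using run_inv[OF assms(7) Dm1] by (metis last_in_set)
  define N where "N j = measure_pmf.prob (run B Dmax lam p init pol t)
      {h. map obs (fst h) = os \<and> snd h = as \<and> bat (last (fst h)) = j}" for j
  define H where "H = hist_prob B Dmax lam p init pol (t + 1) os as"
  define P where "P i = measure_pmf.prob (run B Dmax lam p init pol n)
      {h. map obs (fst h) = os0 \<and> snd h = as0 \<and> bat (last (fst h)) = i}" for i
  define Ht where "Ht = hist_prob B Dmax lam p init pol t os0 as0"
  define c where "c = pmf (pol os0 as0) a'"
  define G where "G i j = pmf (step B Dmax lam p (i, D0, bt0, r0) a') (j, D', bt', r')" for i j
  have bel1: "belief B Dmax lam p init pol (t + 1) os as j = N j / H" for j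
    by (simp add: belief_def N_def H_def hist_prob_def)
  have bel0: "belief B Dmax lam p init pol t os0 as0 i = P i / Ht" for i
    by (simp add: belief_def P_def Ht_def hist_prob_def tn)
  have HN: "H = (\<Sum>j\<le>B. N j)"
    using prob_split[OF inv[of t], of "\<lambda>h. map obs (fst h) = os \<and> snd h = as"]
    by (simp add: H_def N_def hist_prob_def conj_assoc)
  have HtP: "Ht = (\<Sum>i\<le>B. P i)"
    using prob_split[OF inv[of n], of "\<lambda>h. map obs (fst h) = os0 \<and> snd h = as0"]
    by (simp add: Ht_def P_def hist_prob_def conj_assoc tn)
  have NG: "N j = c * (\<Sum>i\<le>B. G i j * P i)" for j
    using num[OF assms(7) Dm1 os0ne l0, of lam p pol n r' D' bt' as0 a' j]
    unfolding N_def c_def G_def P_def os_eq as_eq tn by simp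
  have Hpos: "H > 0" using assms(12) by (simp add: H_def)
  have D0: "D0 \<ge> 1"
  proof -
    have "measure_pmf.prob (run B Dmax lam p init pol t) {h. map obs (fst h) = os \<and> snd h = as} \<noteq> 0"
      using Hpos by (simp add: H_def hist_prob_def)
    then obtain h where hR: "h \<in> set_pmf (run B Dmax lam p init pol t)" and hm: "map obs (fst h) = os"
      unfolding measure_pmf_zero_iff by blast
    have hl: "length (fst h) = Suc t" and hs: "\<forall>s\<in>set (fst h). fst (snd s) \<ge> 1"
      using run_inv[OF assms(7) Dm1 hR] by auto
    have "last os0 = os ! n"
      using assms(10) tn os0ne by (simp add: os0_def last_conv_nth)
    also have "\<dots> = obs (fst h ! n)" using hm hl tn by auto
    finally have e: "last os0 = obs (fst h ! n)" .
    have "fst h ! n \<in> set (fst h)" using hl tn by simp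
    then have "fst (snd (fst h ! n)) \<ge> 1" using hs by blast
    then show ?thesis using e l0 by (cases "fst h ! n") (simp add: obs_def)
  qed
  define R where "R = p * of_bool (r' = 1) + (1 - p) * of_bool (r' = 0)"
  have caseA: "\<forall>j \<le> B. belief B Dmax lam p init pol (t + 1) os as j =
           (\<Sum>i \<le> B. Lam B lam j i * belief B Dmax lam p init pol t os0 as0 i)" if a0: "a' = 0"
  proof -
    define X where "X = (of_bool (D' = min (D0 + 1) Dmax \<and> bt' = bt0) :: real)"
    have GA: "G i j = Lam B lam j i * (X * R)" if "i \<le> B" "j \<le> B" for i j
    proof -
      have "G i j = (lam * of_bool (min (i + 1) B = j) + (1 - lam) * of_bool (min i B = j)) * X * R"
        unfolding G_def X_def R_def using assms(3-6) a0 by (simp add: pmf_step Let_def)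
      also have "lam * of_bool (min (i + 1) B = j) + (1 - lam) * of_bool (min i B = j) = Lam B lam j i"
        using that by (cases "i < B") (auto simp: Lam_def min_def)
      finally show ?thesis by simp
    qed
    have col: "(\<Sum>j\<le>B. Lam B lam j i) = 1" if "i \<le> B" for i
    proof -
      have "(\<Sum>j\<le>B. Lam B lam j i) = (\<Sum>j\<le>B. lam * of_bool (min (i + 1) B = j) + (1 - lam) * of_bool (min i B = j))"
        using that by (intro sum.cong) (auto simp: Lam_def min_def)
      then show ?thesis by (simp add: sum_W)
    qed
    define C where "C = c * (X * R)"
    have NA: "N j = C * (\<Sum>i\<le>B. Lam B lam j i * P i)" if "j \<le> B" for j
      unfolding NG C_def sum_distrib_left using that by (intro sum.cong) (auto simp: GA)
    have "H = (\<Sum>j\<le>B. C * (\<Sum>i\<le>B. Lam B lam j i * P i))" using HN NA by simp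
    also have "\<dots> = C * (\<Sum>j\<le>B. \<Sum>i\<le>B. Lam B lam j i * P i)"
      by (simp only: sum_distrib_left)
    also have "\<dots> = C * (\<Sum>i\<le>B. \<Sum>j\<le>B. Lam B lam j i * P i)"
      by (subst sum.swap) (rule refl)
    also have "\<dots> = C * (\<Sum>i\<le>B. (\<Sum>j\<le>B. Lam B lam j i) * P i)"
      by (simp only: sum_distrib_right)
    also have "\<dots> = C * Ht" by (simp add: col HtP)
    finally have HC: "H = C * Ht" .
    then have "C \<noteq> 0" "Ht \<noteq> 0" using Hpos by auto
    show ?thesis
    proof (intro allI impI)
      fix j assume "j \<le> B"
      have "belief B Dmax lam p init pol (t + 1) os as j = C * (\<Sum>i\<le>B. Lam B lam j i * P i) / (C * Ht)"
        unfolding bel1 HC NA[OF \<open>j \<le> B\<close>] ..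
      also have "\<dots> = (\<Sum>i\<le>B. Lam B lam j i * P i) / Ht" using \<open>C \<noteq> 0\<close> by simp
      also have "\<dots> = (\<Sum>i\<le>B. Lam B lam j i * (P i / Ht))"
        by (simp add: sum_divide_distrib)
      finally show "belief B Dmax lam p init pol (t + 1) os as j =
           (\<Sum>i \<le> B. Lam B lam j i * belief B Dmax lam p init pol t os0 as0 i)"
        by (simp add: bel0)
    qed
  qed
  have single: "\<forall>j\<le>B. belief B Dmax lam p init pol (t + 1) os as j = v j"
    if i0B: "i0 \<le> B" and Gs: "\<forall>i\<le>B. \<forall>j\<le>B. G i j = (if i = i0 then v j * K else 0)"
      and vs: "(\<Sum>j\<le>B. v j) = 1" for i0 v K
  proof -
    have "\<forall>j\<le>B. N j = (c * K * P i0) * v j"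
    proof (intro allI impI)
      fix j assume jB: "j \<le> B"
      have "(\<Sum>i\<le>B. G i j * P i) = G i0 j * P i0"
        by (rule sum_single[OF i0B]) (use Gs jB in auto)
      then show "N j = (c * K * P i0) * v j" using Gs jB i0B by (simp add: NG)
    qed
    from ratio_single[OF this HN vs Hpos] show ?thesis using bel1 by simp
  qed
  have caseB: "\<forall>j \<le> B. belief B Dmax lam p init pol (t + 1) os as j = rho lam 0 j"
    if a1: "a' = 1" and DD: "D' > 1"
  proof (rule single[of 0 _ "of_bool (D' = min (D0 + 1) Dmax \<and> bt' = bt0) * R"])
    have rho0: "rho lam 0 j = lam * of_bool (min 1 B = j) + (1 - lam) * of_bool (min 0 B = j)" for j
      using assms(1) by (simp add: rho_def min_def)
    show "(\<Sum>j\<le>B. rho lam 0 j) = 1" unfolding rho0 by (rule sum_W)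
    show "\<forall>i\<le>B. \<forall>j\<le>B. G i j = (if i = 0 then rho lam 0 j * (of_bool (D' = min (D0 + 1) Dmax \<and> bt' = bt0) * R) else 0)"
    proof (intro allI impI)
      fix i j assume "i \<le> B" "j \<le> B"
      show "G i j = (if i = 0 then rho lam 0 j * (of_bool (D' = min (D0 + 1) Dmax \<and> bt' = bt0) * R) else 0)"
      proof (cases "i = 0")
        case True
        then show ?thesis unfolding G_def R_def rho0 using assms(3-6) a1
          by (simp add: pmf_step Let_def)
      next
        case False
        then show ?thesis unfolding G_def R_def using assms(3-6) a1 DD
          by (simp add: pmf_step Let_def)
      qed
    qed
  qed simp
  have caseC: "\<forall>j \<le> B. belief B Dmax lam p init pol (t + 1) os as j = rho lam k j"
    if a1: "a' = 1" and DD: "D' = 1" and kk: "bt' = k" "k \<in> {1..B}" for k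
  proof (rule single[of k _ R])
    have rhok: "rho lam k j = lam * of_bool (min (k + 1 - 1) B = j) + (1 - lam) * of_bool (min (k - 1) B = j)" for j
      using kk by (auto simp: rho_def min_def)
    show "(\<Sum>j\<le>B. rho lam k j) = 1" unfolding rhok by (rule sum_W)
    show "k \<le> B" using kk by simp
    show "\<forall>i\<le>B. \<forall>j\<le>B. G i j = (if i = k then rho lam k j * R else 0)"
    proof (intro allI impI)
      fix i j assume "i \<le> B" "j \<le> B"
      show "G i j = (if i = k then rho lam k j * R else 0)"
      proof (cases "i = 0")
        case True
        have "min (D0 + 1) Dmax \<noteq> 1" using D0 assms(2) by simp
        then show ?thesis unfolding G_def R_def using True assms(3-6) a1 DD kk
          by (simp add: pmf_step Let_def)
      next
        case False
        then show ?thesis unfolding G_def R_def rhok using assms(3-6) a1 DD kk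
          by (simp add: pmf_step Let_def)
      qed
    qed
  qed
  show ?thesis
    unfolding a'_def[symmetric] os0_def[symmetric] as0_def[symmetric]
    using caseA caseB caseC by (simp add: o' ob_age_def ob_bt_def)
qed

end
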